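(* Let $F$ be a finite hypergraph on vertex set $V$ all of whose edges have size $2$ or $3$. Let $(\gamma_v)_{v\in V}$ be independent $\{0,1\}$-valued random variables with $\Pr[\gamma_v=1]\le\rho$ for all $v$, where $0\le\rho\le 1/6$. For a set $S\subseteq V$ write $\gamma_S\neq 1$ for the event that $\gamma_s=0$ for some $s\in S$. For a vertex $x$ let $q_x=\Pr\big[\bigcap_{e\in F:\,x\in e}\{\gamma_{e\setminus\{x\}}\neq 1\}\big]$. Then for any vertices $x,y,z$ with $y\neq x$ and $z\neq x$, \[ \Pr\Big[\bigcap_{e\in F:\,x\in e,\,y\notin e}\{\gamma_{e\setminus\{x\}}\neq 1\}\Big]\le\Pr\Big[\bigcap_{e\in F:\,x\in e,\,y,z\notin e}\{\gamma_{e\setminus\{x\}}\neq 1\}\Big]\le q_x(1+3\rho). \] *)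

theory Defs
  imports "HOL-Probability.Probability"
begin

text \<open>The event that gamma_S is not identically 1, i.e. gamma_s = 0 (False) for some s in S.
  Random variables are bool-valued, True standing for 1 and False for 0.\<close>
definition not_all_one :: "('v \<Rightarrow> 'a \<Rightarrow> bool) \<Rightarrow> 'v set \<Rightarrow> 'a \<Rightarrow> bool" where
  "not_all_one \<gamma> S \<omega> \<longleftrightarrow> (\<exists>s\<in>S. \<not> \<gamma> s \<omega>)"

end

theory Submission
  imports Defs
begin

lemma all_sets:
  assumes "finite A" "S \<subseteq> space (PiM A (\<lambda>_. count_space (UNIV::bool set)))"
  shows "S \<in> sets (PiM A (\<lambda>_. count_space (UNIV::bool set)))"
proof -
  have sp: "space (PiM A (\<lambda>_. count_space (UNIV::bool set))) = PiE A (\<lambda>_. UNIV)"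
    by (simp add: space_PiM)
  have fin: "finite S" using assms sp finite_subset[OF _ finite_PiE[OF assms(1), of "\<lambda>_. UNIV::bool set"]] by auto
  have single: "{f} \<in> sets (PiM A (\<lambda>_. count_space (UNIV::bool set)))" if "f \<in> S" for f
  proof -
    have f: "f \<in> PiE A (\<lambda>_. UNIV)" using that assms sp by auto
    have "PiE A (\<lambda>i. {f i}) = {f}"
      using f by (auto simp: PiE_def extensional_def Pi_def)
    moreover have "PiE A (\<lambda>i. {f i}) \<in> sets (PiM A (\<lambda>_. count_space (UNIV::bool set)))"
      by (rule sets_PiM_I_finite) (use assms in auto)
    ultimately show ?thesis by simp
  qed
  have "S = (\<Union>f\<in>S. {f})" by auto
  also have "\<dots> \<in> sets (PiM A (\<lambda>_. count_space (UNIV::bool set)))"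
    using fin single by (intro sets.finite_UN) auto
  finally show ?thesis .
qed

lemma ev:
  assumes "finite A" "\<forall>i\<in>A. \<gamma> i \<in> measurable M (count_space (UNIV::bool set))"
    and "\<forall>\<omega>\<in>space M. P \<omega> \<longleftrightarrow> Q (restrict (\<lambda>i. \<gamma> i \<omega>) A)"
  shows "{\<omega>\<in>space M. P \<omega>} \<in> sets M"
proof -
  have m: "(\<lambda>\<omega>. restrict (\<lambda>i. \<gamma> i \<omega>) A) \<in> measurable M (PiM A (\<lambda>_. count_space UNIV))"
    using assms by (intro measurable_restrict) auto
  have "{f \<in> space (PiM A (\<lambda>_. count_space (UNIV::bool set))). Q f} \<in> sets (PiM A (\<lambda>_. count_space (UNIV::bool set)))"
    using assms(1) by (intro all_sets) auto
  from measurable_sets[OF m this]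
  have "(\<lambda>\<omega>. restrict (\<lambda>i. \<gamma> i \<omega>) A) -` {f \<in> space (PiM A (\<lambda>_. count_space (UNIV::bool set))). Q f} \<inter> space M \<in> sets M" .
  moreover have "(\<lambda>\<omega>. restrict (\<lambda>i. \<gamma> i \<omega>) A) -` {f \<in> space (PiM A (\<lambda>_. count_space (UNIV::bool set))). Q f} \<inter> space M
     = {\<omega>\<in>space M. P \<omega>}"
    using assms(3) by (auto simp: space_PiM)
  ultimately show ?thesis by simp
qed

theorem mainTheorem9:
  fixes M :: "'a measure" and V :: "'v set" and F :: "'v set set"
    and \<gamma> :: "'v \<Rightarrow> 'a \<Rightarrow> bool" and \<rho> :: real and x y z :: 'v
  assumes "prob_space M"
    and "finite V"
    and "\<forall>e\<in>F. e \<subseteq> V \<and> (card e = 2 \<or> card e = 3)"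
    and "prob_space.indep_vars M (\<lambda>_. count_space UNIV) \<gamma> V"
    and "\<forall>v\<in>V. measure M {\<omega> \<in> space M. \<gamma> v \<omega>} \<le> \<rho>"
    and "0 \<le> \<rho>" and "\<rho> \<le> 1/6"
    and "x \<in> V" and "y \<in> V" and "z \<in> V" and "y \<noteq> x" and "z \<noteq> x"
  shows "measure M {\<omega> \<in> space M. \<forall>e\<in>F. x \<in> e \<and> y \<notin> e \<longrightarrow> not_all_one \<gamma> (e - {x}) \<omega>}
           \<le> measure M {\<omega> \<in> space M. \<forall>e\<in>F. x \<in> e \<and> y \<notin> e \<and> z \<notin> e \<longrightarrow> not_all_one \<gamma> (e - {x}) \<omega>}
       \<and> measure M {\<omega> \<in> space M. \<forall>e\<in>F. x \<in> e \<and> y \<notin> e \<and> z \<notin> e \<longrightarrow> not_all_one \<gamma> (e - {x}) \<omega>}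
           \<le> measure M {\<omega> \<in> space M. \<forall>e\<in>F. x \<in> e \<longrightarrow> not_all_one \<gamma> (e - {x}) \<omega>} * (1 + 3 * \<rho>)"
  proof -
  interpret p: prob_space M by fact
  have meas: "\<forall>i\<in>V. \<gamma> i \<in> measurable M (count_space (UNIV::bool set))"
    using assms(4) by (auto simp: p.indep_vars_def)
  have eV: "\<And>e. e \<in> F \<Longrightarrow> e \<subseteq> V" using assms(3) by auto
  define E1 where "E1 = {\<omega> \<in> space M. \<forall>e\<in>F. x \<in> e \<and> y \<notin> e \<longrightarrow> not_all_one \<gamma> (e - {x}) \<omega>}"
  define E2 where "E2 = {\<omega> \<in> space M. \<forall>e\<in>F. x \<in> e \<and> y \<notin> e \<and> z \<notin> e \<longrightarrow> not_all_one \<gamma> (e - {x}) \<omega>}"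
  define Q where "Q = {\<omega> \<in> space M. \<forall>e\<in>F. x \<in> e \<longrightarrow> not_all_one \<gamma> (e - {x}) \<omega>}"
  define C where "C = {\<omega> \<in> space M. \<not> \<gamma> y \<omega> \<and> \<not> \<gamma> z \<omega>}"
  define Y where "Y = {\<omega> \<in> space M. \<gamma> y \<omega>}"
  define Z where "Z = {\<omega> \<in> space M. \<gamma> z \<omega>}"
  have E2m: "E2 \<in> sets M" unfolding E2_def
    by (rule ev[OF assms(2) meas, where Q="\<lambda>f. \<forall>e\<in>F. x \<in> e \<and> y \<notin> e \<and> z \<notin> e \<longrightarrow> (\<exists>s\<in>e-{x}. \<not> f s)"])
       (use eV in \<open>fastforce simp: not_all_one_def\<close>)
  have Qm: "Q \<in> sets M" unfolding Q_def
    by (rule ev[OF assms(2) meas, where Q="\<lambda>f. \<forall>e\<in>F. x \<in> e \<longrightarrow> (\<exists>s\<in>e-{x}. \<not> f s)"])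
       (use eV in \<open>fastforce simp: not_all_one_def\<close>)
  have Ym: "Y \<in> sets M" unfolding Y_def
    by (rule ev[OF assms(2) meas, where Q="\<lambda>f. f y"]) (use assms(9) in auto)
  have Zm: "Z \<in> sets M" unfolding Z_def
    by (rule ev[OF assms(2) meas, where Q="\<lambda>f. f z"]) (use assms(10) in auto)
  have first: "measure M E1 \<le> measure M E2"
    by (rule p.finite_measure_mono) (use E2m in \<open>auto simp: E1_def E2_def\<close>)
  define A where "A = V - {y, z}"
  define B where "B = {y, z}"
  have ind: "p.indep_var (PiM A (\<lambda>_. count_space UNIV)) (\<lambda>\<omega>. restrict (\<lambda>i. \<gamma> i \<omega>) A)
      (PiM B (\<lambda>_. count_space UNIV)) (\<lambda>\<omega>. restrict (\<lambda>i. \<gamma> i \<omega>) B)"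
    by (rule p.indep_var_restrict[OF assms(4)]) (use assms(9,10) in \<open>auto simp: A_def B_def\<close>)
  define Xa where "Xa = {f \<in> space (PiM A (\<lambda>_. count_space (UNIV::bool set))).
      \<forall>e\<in>F. x \<in> e \<and> y \<notin> e \<and> z \<notin> e \<longrightarrow> (\<exists>s\<in>e-{x}. \<not> f s)}"
  define Xb where "Xb = {f \<in> space (PiM B (\<lambda>_. count_space (UNIV::bool set))). \<not> f y \<and> \<not> f z}"
  have Xam: "Xa \<in> sets (PiM A (\<lambda>_. count_space (UNIV::bool set)))"
    unfolding Xa_def by (rule all_sets) (use assms(2) in \<open>auto simp: A_def\<close>)
  have Xbm: "Xb \<in> sets (PiM B (\<lambda>_. count_space (UNIV::bool set)))"
    unfolding Xb_def by (rule all_sets) (auto simp: B_def)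
  have key: "(\<forall>e\<in>F. x \<in> e \<and> y \<notin> e \<and> z \<notin> e \<longrightarrow> (\<exists>s\<in>e-{x}. \<not> restrict (\<lambda>i. \<gamma> i \<omega>) A s))
      \<longleftrightarrow> (\<forall>e\<in>F. x \<in> e \<and> y \<notin> e \<and> z \<notin> e \<longrightarrow> not_all_one \<gamma> (e - {x}) \<omega>)" for \<omega>
  proof -
    have r: "restrict (\<lambda>i. \<gamma> i \<omega>) A s = \<gamma> s \<omega>" if "e \<in> F" "y \<notin> e" "z \<notin> e" "s \<in> e - {x}" for e s
      using that eV[OF that(1)] by (auto simp: A_def)
    show ?thesis unfolding not_all_one_def
    proof (intro iffI ballI impI)
      fix e assume h: "\<forall>e\<in>F. x \<in> e \<and> y \<notin> e \<and> z \<notin> e \<longrightarrow> (\<exists>s\<in>e-{x}. \<not> restrict (\<lambda>i. \<gamma> i \<omega>) A s)"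
        and e: "e \<in> F" "x \<in> e \<and> y \<notin> e \<and> z \<notin> e"
      then obtain s where "s \<in> e - {x}" "\<not> restrict (\<lambda>i. \<gamma> i \<omega>) A s" by blast
      thus "\<exists>s\<in>e - {x}. \<not> \<gamma> s \<omega>" using r[of e s] e by auto
    next
      fix e assume h: "\<forall>e\<in>F. x \<in> e \<and> y \<notin> e \<and> z \<notin> e \<longrightarrow> (\<exists>s\<in>e-{x}. \<not> \<gamma> s \<omega>)"
        and e: "e \<in> F" "x \<in> e \<and> y \<notin> e \<and> z \<notin> e"
      then obtain s where "s \<in> e - {x}" "\<not> \<gamma> s \<omega>" by blast
      thus "\<exists>s\<in>e - {x}. \<not> restrict (\<lambda>i. \<gamma> i \<omega>) A s" using r[of e s] e by auto
    qed
  qed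
  have inA: "restrict (\<lambda>i. \<gamma> i \<omega>) A \<in> space (PiM A (\<lambda>_. count_space (UNIV::bool set)))" for \<omega>
    by (simp add: space_PiM)
  have inB: "restrict (\<lambda>i. \<gamma> i \<omega>) B \<in> space (PiM B (\<lambda>_. count_space (UNIV::bool set)))" for \<omega>
    by (simp add: space_PiM)
  have s2: "(\<lambda>\<omega>. restrict (\<lambda>i. \<gamma> i \<omega>) A) -` Xa \<inter> space M = E2"
    unfolding Xa_def E2_def set_eq_iff vimage_eq Int_iff mem_Collect_eq
    using key inA by (intro allI) (metis (no_types, lifting))
  have s3: "(\<lambda>\<omega>. restrict (\<lambda>i. \<gamma> i \<omega>) B) -` Xb \<inter> space M = C"
    unfolding Xb_def C_def set_eq_iff vimage_eq Int_iff mem_Collect_eq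
    using inB by (intro allI) (auto simp: B_def)
  have s1: "(\<lambda>\<omega>. (restrict (\<lambda>i. \<gamma> i \<omega>) A, restrict (\<lambda>i. \<gamma> i \<omega>) B)) -` (Xa \<times> Xb) \<inter> space M = E2 \<inter> C"
  proof -
    have "(\<lambda>\<omega>. (restrict (\<lambda>i. \<gamma> i \<omega>) A, restrict (\<lambda>i. \<gamma> i \<omega>) B)) -` (Xa \<times> Xb) \<inter> space M
      = ((\<lambda>\<omega>. restrict (\<lambda>i. \<gamma> i \<omega>) A) -` Xa \<inter> space M) \<inter> ((\<lambda>\<omega>. restrict (\<lambda>i. \<gamma> i \<omega>) B) -` Xb \<inter> space M)"
      by blast
    thus ?thesis by (simp only: s2 s3)
  qed
  have prodeq: "measure M (E2 \<inter> C) = measure M E2 * measure M C"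
    using p.indep_varD[OF ind Xam Xbm] s1 s2 s3 by simp
  have "E2 \<inter> C \<subseteq> Q"
    using assms(11,12) by (auto simp: E2_def C_def Q_def not_all_one_def)
  hence q: "measure M E2 * measure M C \<le> measure M Q"
    using prodeq p.finite_measure_mono[OF _ Qm] by metis
  have Ceq: "C = space M - (Y \<union> Z)" by (auto simp: C_def Y_def Z_def)
  have "measure M C = 1 - measure M (Y \<union> Z)"
    unfolding Ceq using Ym Zm by (intro p.prob_compl) auto
  moreover have "measure M (Y \<union> Z) \<le> measure M Y + measure M Z"
    using Ym Zm by (intro measure_subadditive) auto
  moreover have "measure M Y \<le> \<rho>" "measure M Z \<le> \<rho>"
    using assms(5,9,10) by (auto simp: Y_def Z_def)
  ultimately have c: "measure M C \<ge> 1 - 2 * \<rho>" by linarith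
  have a0: "measure M E2 \<ge> 0" by simp
  have "measure M E2 \<le> measure M E2 * ((1 - 2*\<rho>) * (1 + 3*\<rho>))"
  proof -
    have "(1 - 2*\<rho>) * (1 + 3*\<rho>) \<ge> 1" 
    proof -
      have "0 \<le> \<rho> * (1 - 6*\<rho>)" using assms(6,7) by (intro mult_nonneg_nonneg) auto
      thus ?thesis by (simp add: algebra_simps)
    qed
    thus ?thesis using a0 by (metis mult.right_neutral mult_left_mono)
  qed
  also have "\<dots> \<le> measure M E2 * (measure M C * (1 + 3*\<rho>))"
    using a0 c assms(6) by (intro mult_left_mono mult_right_mono) auto
  also have "\<dots> \<le> measure M Q * (1 + 3*\<rho>)"
    using q assms(6) by (simp add: mult.assoc[symmetric] mult_right_mono)
  finally show ?thesis using first unfolding E1_def E2_def Q_def by simp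
qed

end
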